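(* Let $G=(V\cup\{O\},E)$ be a connected, unweighted, undirected graph, where $V$ is a set of $n$ terminals and $O\notin V$ is the depot, and let $k\in[1,n]$ be an arbitrary integer tour capacity. Let $\mathrm{opt}$ be the minimum cost of a feasible solution to the graphic CVRP on this instance, and let $\mathrm{opt}_{\mathrm{TSP}}$ be the minimum cost of a traveling salesman tour on $V\cup\{O\}$. Let $\beta\geq\frac12$ and $\gamma\geq 0$, and let $S$ be a traveling salesman tour on $V\cup\{O\}$ of cost at most $\beta\cdot n+\gamma\cdot\mathrm{opt}_{\mathrm{TSP}}$. Then the iterated tour partitioning algorithm applied to $S$ outputs a feasible solution to the graphic CVRP of cost at most $\left(\beta+\gamma+\frac12\right)\cdot\mathrm{opt}$.
   Context: Distances are graphic: the distance between two vertices is the number of edges on a shortest path between them in $G$; $\mathrm{dist}(v)$ denotes the distance from $v$ to $O$. A tour is a closed walk in $G$ starting and ending at $O$; its cost is its number of edges (with multiplicity). In the graphic CVRP, each terminal has unit demand; a feasible solution is a set of tours, together with an assignment of each terminal to exactly one tour visiting it, such that each tour is assigned at most $k$ terminals; the cost is the total cost of the tours and the goal is to minimize it. A traveling salesman tour on $V\cup\{O\}$ is a closed walk in $G$ visiting every vertex of $V\cup\{O\}$; its cost is its number of edges. The iterated tour partitioning (ITP) algorithm applied to a traveling salesman tour $S$: order the terminals $v_1,\dots,v_n$ by their first occurrence along $S$ starting from $O$; for each offset $i\in\{1,\dots,k\}$, cut this sequence into consecutive segments, the first containing the first $i$ terminals and each subsequent one containing the next $k$ terminals (the last possibly fewer);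 each segment, taken as the portion of $S$ from its first to its last terminal, is turned into a tour by joining both endpoints to $O$ via shortest paths, and covers the terminals of that segment; among the $k$ resulting solutions, output one of minimum cost. *)

theory Defs
  imports Complex_Main
begin

text \<open>The graph G = (V \<union> {dep}, E) is given by a vertex set V of terminals, a depot dep,
 and a symmetric irreflexive adjacency relation E on V \<union> {dep}.\<close>

definition walk :: "('a \<Rightarrow> 'a \<Rightarrow> bool) \<Rightarrow> 'a set \<Rightarrow> 'a \<Rightarrow> 'a list \<Rightarrow> bool" where
  "walk E V dep p \<longleftrightarrow> p \<noteq> [] \<and> set p \<subseteq> insert dep V \<and>
     (\<forall>i. i + 1 < length p \<longrightarrow> E (p ! i) (p ! (i + 1)))"

definition walk_cost :: "'a list \<Rightarrow> nat" where
  "walk_cost p = length p - 1"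

definition connected_graph :: "('a \<Rightarrow> 'a \<Rightarrow> bool) \<Rightarrow> 'a set \<Rightarrow> 'a \<Rightarrow> bool" where
  "connected_graph E V dep \<longleftrightarrow>
     (\<forall>u\<in>insert dep V. \<forall>v\<in>insert dep V. \<exists>p. walk E V dep p \<and> hd p = u \<and> last p = v)"

definition gdist :: "('a \<Rightarrow> 'a \<Rightarrow> bool) \<Rightarrow> 'a set \<Rightarrow> 'a \<Rightarrow> 'a \<Rightarrow> 'a \<Rightarrow> nat" where
  "gdist E V dep u v = (LEAST m. \<exists>p. walk E V dep p \<and> hd p = u \<and> last p = v \<and> walk_cost p = m)"

definition shortest_path :: "('a \<Rightarrow> 'a \<Rightarrow> bool) \<Rightarrow> 'a set \<Rightarrow> 'a \<Rightarrow> 'a \<Rightarrow> 'a \<Rightarrow> 'a list" where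
  "shortest_path E V dep u v = (SOME p. walk E V dep p \<and> hd p = u \<and> last p = v \<and>
       walk_cost p = gdist E V dep u v)"

definition tour :: "('a \<Rightarrow> 'a \<Rightarrow> bool) \<Rightarrow> 'a set \<Rightarrow> 'a \<Rightarrow> 'a list \<Rightarrow> bool" where
  "tour E V dep p \<longleftrightarrow> walk E V dep p \<and> hd p = dep \<and> last p = dep"

text \<open>A CVRP solution: a list of tours together with an assignment of each terminal
 to the index of a tour.\<close>
type_synonym 'a cvrp_sol = "'a list list \<times> ('a \<Rightarrow> nat)"

definition cvrp_feasible :: "('a \<Rightarrow> 'a \<Rightarrow> bool) \<Rightarrow> 'a set \<Rightarrow> 'a \<Rightarrow> nat \<Rightarrow> 'a cvrp_sol \<Rightarrow> bool" where
  "cvrp_feasible E V dep k sol \<longleftrightarrow>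
     (\<forall>t\<in>set (fst sol). tour E V dep t) \<and>
     (\<forall>v\<in>V. snd sol v < length (fst sol) \<and> v \<in> set (fst sol ! snd sol v)) \<and>
     (\<forall>j<length (fst sol). card {v\<in>V. snd sol v = j} \<le> k)"

definition sol_cost :: "'a cvrp_sol \<Rightarrow> nat" where
  "sol_cost sol = sum_list (map walk_cost (fst sol))"

definition cvrp_opt :: "('a \<Rightarrow> 'a \<Rightarrow> bool) \<Rightarrow> 'a set \<Rightarrow> 'a \<Rightarrow> nat \<Rightarrow> nat" where
  "cvrp_opt E V dep k = (LEAST c. \<exists>sol. cvrp_feasible E V dep k sol \<and> sol_cost sol = c)"

definition tsp_tour :: "('a \<Rightarrow> 'a \<Rightarrow> bool) \<Rightarrow> 'a set \<Rightarrow> 'a \<Rightarrow> 'a list \<Rightarrow> bool" where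
  "tsp_tour E V dep p \<longleftrightarrow> tour E V dep p \<and> insert dep V \<subseteq> set p"

definition tsp_opt :: "('a \<Rightarrow> 'a \<Rightarrow> bool) \<Rightarrow> 'a set \<Rightarrow> 'a \<Rightarrow> nat" where
  "tsp_opt E V dep = (LEAST c. \<exists>p. tsp_tour E V dep p \<and> walk_cost p = c)"

text \<open>Positions in S of the first occurrences of terminals, in increasing order;
 the terminal sequence v_1..v_n is the list of entries of S at these positions.\<close>
definition first_positions :: "'a set \<Rightarrow> 'a list \<Rightarrow> nat list" where
  "first_positions V S = [j \<leftarrow> [0..<length S]. S ! j \<in> V \<and> (\<forall>j'<j. S ! j' \<noteq> S ! j)]"

fun chunks :: "nat \<Rightarrow> 'b list \<Rightarrow> 'b list list" where
  "chunks k [] = []"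
| "chunks k (x # xs) = (if k = 0 then [x # xs] else take k (x # xs) # chunks k (drop k (x # xs)))"

definition itp_segments :: "'a set \<Rightarrow> nat \<Rightarrow> 'a list \<Rightarrow> nat \<Rightarrow> nat list list" where
  "itp_segments V k S i =
     (let P = first_positions V S in take i P # chunks k (drop i P))"

definition segment_tour :: "('a \<Rightarrow> 'a \<Rightarrow> bool) \<Rightarrow> 'a set \<Rightarrow> 'a \<Rightarrow> 'a list \<Rightarrow> nat list \<Rightarrow> 'a list" where
  "segment_tour E V dep S seg =
     (let a = hd seg; b = last seg in
      shortest_path E V dep dep (S ! a) @ tl (take (b - a + 1) (drop a S))
        @ tl (shortest_path E V dep (S ! b) dep))"

definition itp_solution :: "('a \<Rightarrow> 'a \<Rightarrow> bool) \<Rightarrow> 'a set \<Rightarrow> 'a \<Rightarrow> nat \<Rightarrow> 'a list \<Rightarrow> nat \<Rightarrow> 'a cvrp_sol" where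
  "itp_solution E V dep k S i =
     (let segs = itp_segments V k S i in
      (map (segment_tour E V dep S) segs,
       \<lambda>v. LEAST m. m < length segs \<and> v \<in> (\<lambda>j. S ! j) ` set (segs ! m)))"

definition itp :: "('a \<Rightarrow> 'a \<Rightarrow> bool) \<Rightarrow> 'a set \<Rightarrow> 'a \<Rightarrow> nat \<Rightarrow> 'a list \<Rightarrow> 'a cvrp_sol" where
  "itp E V dep k S = itp_solution E V dep k S
     (ARG_MIN (\<lambda>i. sol_cost (itp_solution E V dep k S i)) i. i \<in> {1..k})"

end

theory Submission
  imports Defs
begin


lemma walk_cost_len: "p \<noteq> [] \<Longrightarrow> walk_cost p + 1 = length p"
  by (simp add: walk_cost_def)

lemma walk_append:
  assumes "walk E V dep p" "walk E V dep q" "last p = hd q"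
  shows "walk E V dep (p @ tl q)" "hd (p @ tl q) = hd p" "last (p @ tl q) = last q"
    "walk_cost (p @ tl q) = walk_cost p + walk_cost q"
proof -
  have pq: "p \<noteq> []" "q \<noteq> []" using assms unfolding walk_def by auto
  show "hd (p @ tl q) = hd p" using pq by simp
  show "last (p @ tl q) = last q" using pq assms(3)
    by (cases q) auto
  show "walk_cost (p @ tl q) = walk_cost p + walk_cost q"
    using pq by (cases q; cases p) (auto simp: walk_cost_def)
  show "walk E V dep (p @ tl q)"
    unfolding walk_def
  proof (intro conjI allI impI)
    show "p @ tl q \<noteq> []" using pq by simp
    show "set (p @ tl q) \<subseteq> insert dep V" using assms pq unfolding walk_def
      by (cases q) auto
  next
    fix i assume i: "i + 1 < length (p @ tl q)"
    show "E ((p @ tl q) ! i) ((p @ tl q) ! (i + 1))"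
    proof (cases "i + 1 < length p")
      case True
      then show ?thesis using assms(1) unfolding walk_def by (simp add: nth_append)
    next
      case False
      then have ip: "i + 1 \<ge> length p" by simp
      obtain j where j: "j = i + 1 - length p" by simp
      have jq: "j + 1 < length q" using i ip j pq by (cases q) auto
      have e: "E (q ! j) (q ! (j + 1))" using assms(2) jq unfolding walk_def by blast
      have a: "(p @ tl q) ! (i + 1) = q ! (j + 1)"
        using ip j pq by (cases q) (auto simp: nth_append)
      have b: "(p @ tl q) ! i = q ! j"
      proof (cases "i + 1 = length p")
        case True
        then have "(p @ tl q) ! i = last p" using pq
          by (simp add: nth_append last_conv_nth flip: True)
        then show ?thesis using True j assms(3) pq by (simp add: hd_conv_nth)
      next
        case False
        then show ?thesis using ip j pq by (cases q) (auto simp: nth_append)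
      qed
      show ?thesis using a b e by simp
    qed
  qed
qed

lemma set_append_tl:
  assumes "p \<noteq> []" "q \<noteq> []" "last p = hd q"
  shows "set (p @ tl q) = set p \<union> set q"
  using assms by (cases q) auto

lemma walk_rev:
  assumes "\<forall>u v. E u v \<longrightarrow> E v u" "walk E V dep p"
  shows "walk E V dep (rev p)"
  unfolding walk_def
proof (intro conjI allI impI)
  show "rev p \<noteq> []" "set (rev p) \<subseteq> insert dep V" using assms(2) unfolding walk_def by auto
next
  fix i assume i: "i + 1 < length (rev p)"
  have "E (p ! (length p - 1 - (i + 1))) (p ! (length p - 1 - (i + 1) + 1))"
    using assms(2) i unfolding walk_def by auto
  moreover have "length p - 1 - (i + 1) + 1 = length p - 1 - i" using i by simp
  ultimately show "E (rev p ! i) (rev p ! (i + 1))"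
    using i assms(1) by (simp add: rev_nth)
qed

lemma walk_sub:
  assumes "walk E V dep p" "a \<le> b" "b < length p"
  shows "walk E V dep (take (b - a + 1) (drop a p))" "hd (take (b - a + 1) (drop a p)) = p ! a"
    "last (take (b - a + 1) (drop a p)) = p ! b" "walk_cost (take (b - a + 1) (drop a p)) = b - a"
proof -
  let ?q = "take (b - a + 1) (drop a p)"
  have len: "length ?q = b - a + 1" using assms by simp
  have nth: "\<And>i. i < b - a + 1 \<Longrightarrow> ?q ! i = p ! (a + i)" using assms by simp
  show "hd ?q = p ! a" using nth[of 0] len by (simp add: hd_conv_nth)
  show "last ?q = p ! b" using nth[of "b - a"] len assms by (simp add: last_conv_nth)
  show "walk_cost ?q = b - a" using len by (simp add: walk_cost_def)
  show "walk E V dep ?q" unfolding walk_def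
  proof (intro conjI allI impI)
    show "?q \<noteq> []" using len by auto
    show "set ?q \<subseteq> insert dep V" using assms(1) unfolding walk_def
      by (meson order_trans set_drop_subset set_take_subset)
  next
    fix i assume "i + 1 < length ?q"
    moreover have "a + i + 1 < length p" using \<open>i + 1 < length ?q\<close> len assms by simp
    ultimately show "E (?q ! i) (?q ! (i + 1))" using nth[of i] nth[of "i+1"] len assms(1) unfolding walk_def
      by simp
  qed
qed

locale graph =
  fixes E :: "'a \<Rightarrow> 'a \<Rightarrow> bool" and V :: "'a set" and dep :: 'a
  assumes sym: "\<forall>u v. E u v \<longrightarrow> E v u"
    and conn: "connected_graph E V dep"
begin

lemma gdist_le:
  assumes "walk E V dep p" "hd p = u" "last p = v"
  shows "gdist E V dep u v \<le> walk_cost p"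
  unfolding gdist_def by (rule Least_le) (use assms in blast)

lemma shortest:
  assumes "u \<in> insert dep V" "v \<in> insert dep V"
  shows "walk E V dep (shortest_path E V dep u v) \<and> hd (shortest_path E V dep u v) = u \<and>
    last (shortest_path E V dep u v) = v \<and>
    walk_cost (shortest_path E V dep u v) = gdist E V dep u v"
proof -
  obtain p where p: "walk E V dep p" "hd p = u" "last p = v"
    using conn assms unfolding connected_graph_def by blast
  have "\<exists>q. walk E V dep q \<and> hd q = u \<and> last q = v \<and> walk_cost q = gdist E V dep u v"
    unfolding gdist_def by (rule LeastI[of _ "walk_cost p"]) (use p in blast)
  then show ?thesis unfolding shortest_path_def by (rule someI_ex)
qed

lemma gdist_sym:
  assumes "u \<in> insert dep V" "v \<in> insert dep V"
  shows "gdist E V dep u v = gdist E V dep v u"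
proof -
  have *: "gdist E V dep y x \<le> gdist E V dep x y" if "x \<in> insert dep V" "y \<in> insert dep V" for x y
  proof -
    let ?p = "shortest_path E V dep x y"
    have p: "walk E V dep ?p" "hd ?p = x" "last ?p = y" "walk_cost ?p = gdist E V dep x y"
      using shortest[OF that] by auto
    have "walk E V dep (rev ?p)" using walk_rev[OF sym p(1)] .
    moreover have "hd (rev ?p) = y" "last (rev ?p) = x" using p by (simp_all add: hd_rev last_rev)
    moreover have "walk_cost (rev ?p) = walk_cost ?p" by (simp add: walk_cost_def)
    ultimately show ?thesis using gdist_le p(4) by metis
  qed
  show ?thesis using *[OF assms] *[OF assms(2,1)] by simp
qed

end


lemma fp_mem: "j \<in> set (first_positions V S) \<longleftrightarrow> j < length S \<and> S ! j \<in> V \<and> (\<forall>j'<j. S ! j' \<noteq> S ! j)"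
  unfolding first_positions_def by auto

lemma fp_sorted: "sorted_wrt (<) (first_positions V S)"
  unfolding first_positions_def by (rule sorted_wrt_filter) (simp add: sorted_wrt_upt)

lemma fp_inj: "inj_on ((!) S) (set (first_positions V S))"
proof (rule inj_onI)
  fix x y assume x: "x \<in> set (first_positions V S)" and y: "y \<in> set (first_positions V S)"
    and e: "S ! x = S ! y"
  show "x = y"
  proof (rule ccontr)
    assume "x \<noteq> y"
    then consider "x < y" | "y < x" by linarith
    then show False using x y e unfolding fp_mem by metis
  qed
qed

lemma fp_distinct: "distinct (map ((!) S) (first_positions V S))"
  by (simp add: distinct_map fp_inj) (simp add: first_positions_def)

lemma fp_image: "(!) S ` set (first_positions V S) = V \<inter> set S"
proof
  show "(!) S ` set (first_positions V S) \<subseteq> V \<inter> set S" by (auto simp: fp_mem)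
  show "V \<inter> set S \<subseteq> (!) S ` set (first_positions V S)"
  proof
    fix v assume v: "v \<in> V \<inter> set S"
    then obtain j0 where j0: "j0 < length S" "S ! j0 = v" by (auto simp: in_set_conv_nth)
    define j where "j = (LEAST j. j < length S \<and> S ! j = v)"
    have j: "j < length S" "S ! j = v" using LeastI[of "\<lambda>j. j < length S \<and> S ! j = v", OF conjI[OF j0]]
      unfolding j_def by auto
    have "\<forall>j'<j. S ! j' \<noteq> S ! j"
    proof (intro allI impI)
      fix j' assume "j' < j"
      then show "S ! j' \<noteq> S ! j" using not_less_Least[of j' "\<lambda>j. j < length S \<and> S ! j = v"] j
        unfolding j_def by auto
    qed
    then have "j \<in> set (first_positions V S)" using j v by (simp add: fp_mem)
    then show "v \<in> (!) S ` set (first_positions V S)" using j by force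
  qed
qed

lemma fp_length:
  assumes "finite V" "V \<subseteq> set S"
  shows "length (first_positions V S) = card V"
proof -
  have "card (set (map ((!) S) (first_positions V S))) = length (first_positions V S)"
    using fp_distinct distinct_card by (metis length_map)
  moreover have "set (map ((!) S) (first_positions V S)) = V" using fp_image[of S V] assms by auto
  ultimately show ?thesis by simp
qed

lemma chunks_props:
  assumes "0 < k"
  shows "concat (chunks k xs) = xs \<and> (\<forall>c\<in>set (chunks k xs). c \<noteq> [] \<and> length c \<le> k)"
  using assms by (induction k xs rule: chunks.induct) auto

lemma chunks_long:
  assumes "0 < k" "k < length xs"
  shows "chunks k xs = take k xs # chunks k (drop k xs)"
  using assms by (cases xs) auto

lemma chunks_short:
  assumes "xs \<noteq> []" "length xs \<le> k"
  shows "chunks k xs = [xs]"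
  using assms by (cases xs) auto

lemma chunks_sum:
  fixes h :: "nat list \<Rightarrow> int" and g :: "nat \<Rightarrow> nat \<Rightarrow> int"
  assumes hg: "\<And>ys zs. ys \<noteq> [] \<Longrightarrow> zs \<noteq> [] \<Longrightarrow> h ys + h zs = h (ys @ zs) + g (last ys) (hd zs)"
    and k: "0 < k"
  shows "s < length P \<Longrightarrow> (\<Sum>c\<leftarrow>chunks k (drop s P). h c) = h (drop s P) +
     (\<Sum>j<length P - 1. if s \<le> j \<and> (j + 1 - s) mod k = 0 then g (P!j) (P!(j+1)) else 0)"
proof (induction "length P - s" arbitrary: s rule: less_induct)
  case less
  show ?case
  proof (cases "length P - s \<le> k")
    case True
    have c: "chunks k (drop s P) = [drop s P]" using True less.prems by (intro chunks_short) auto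
    have "(\<Sum>j<length P - 1. if s \<le> j \<and> (j + 1 - s) mod k = 0 then g (P!j) (P!(j+1)) else 0) = 0"
    proof (rule sum.neutral, intro ballI)
      fix j assume "j \<in> {..<length P - 1}"
      then have "s \<le> j \<Longrightarrow> 0 < j + 1 - s \<and> j + 1 - s < k" using True by auto
      then show "(if s \<le> j \<and> (j + 1 - s) mod k = 0 then g (P!j) (P!(j+1)) else 0) = 0" by auto
    qed
    then show ?thesis using c by simp
  next
    case False
    have c: "chunks k (drop s P) = take k (drop s P) # chunks k (drop (s + k) P)"
      using False k by (subst chunks_long) (auto simp: add.commute)
    have IH: "(\<Sum>c\<leftarrow>chunks k (drop (s + k) P). h c) = h (drop (s + k) P) +
     (\<Sum>j<length P - 1. if s + k \<le> j \<and> (j + 1 - (s + k)) mod k = 0 then g (P!j) (P!(j+1)) else 0)"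
      using less.hyps[of "s + k"] False k by auto
    have split: "h (take k (drop s P)) + h (drop (s + k) P) = h (drop s P) + g (P ! (s + k - 1)) (P ! (s + k))"
    proof -
      have "take k (drop s P) @ drop (s + k) P = drop s P" by (metis append_take_drop_id drop_drop add.commute)
      moreover have "last (take k (drop s P)) = P ! (s + k - 1)" using False k
        by (simp add: last_conv_nth min_def)
      moreover have "hd (drop (s + k) P) = P ! (s + k)" using False by (simp add: hd_drop_conv_nth)
      ultimately show ?thesis using hg[of "take k (drop s P)" "drop (s + k) P"] False k by auto
    qed
    have pw: "(if s \<le> j \<and> (j + 1 - s) mod k = 0 then g (P!j) (P!(j+1)) else 0) =
      (if j = s + k - 1 then g (P!j) (P!(j+1)) else 0) +
      (if s + k \<le> j \<and> (j + 1 - (s + k)) mod k = 0 then g (P!j) (P!(j+1)) else 0)" for j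
    proof (cases "s \<le> j")
      case True
      show ?thesis
      proof (cases "j < s + k - 1")
        case True
        then have "0 < j + 1 - s" "j + 1 - s < k" using \<open>s \<le> j\<close> by auto
        then show ?thesis using True by auto
      next
        case False
        show ?thesis
        proof (cases "j = s + k - 1")
          case True
          then show ?thesis using k by auto
        next
          case False
          then have "s + k \<le> j" using \<open>\<not> j < s + k - 1\<close> k by auto
          then have "j + 1 - s = (j + 1 - (s + k)) + k" by auto
          then have "(j + 1 - s) mod k = (j + 1 - (s + k)) mod k" by simp
          then show ?thesis using False \<open>s + k \<le> j\<close> by auto
        qed
      qed
    next
      case False
      then show ?thesis using k by auto
    qed
    have "(\<Sum>j<length P - 1. if s \<le> j \<and> (j + 1 - s) mod k = 0 then g (P!j) (P!(j+1)) else 0) =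
      (\<Sum>j<length P - 1. if j = s + k - 1 then g (P!j) (P!(j+1)) else 0) +
      (\<Sum>j<length P - 1. if s + k \<le> j \<and> (j + 1 - (s + k)) mod k = 0 then g (P!j) (P!(j+1)) else 0)"
      by (simp only: pw sum.distrib)
    also have "(\<Sum>j<length P - 1. if j = s + k - 1 then g (P!j) (P!(j+1)) else 0) = g (P ! (s + k - 1)) (P ! (s + k))"
    proof -
      have m: "s + k - 1 \<in> {..<length P - 1}" "s + k - 1 + 1 = s + k" using False k by auto
      show ?thesis by (subst sum.delta) (auto simp only: m if_True)
    qed
    finally show ?thesis using c IH split by simp
  qed
qed

lemma segs_sum:
  fixes h :: "nat list \<Rightarrow> int" and g :: "nat \<Rightarrow> nat \<Rightarrow> int"
  assumes hg: "\<And>ys zs. ys \<noteq> [] \<Longrightarrow> zs \<noteq> [] \<Longrightarrow> h ys + h zs = h (ys @ zs) + g (last ys) (hd zs)"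
    and k: "0 < k" and i: "1 \<le> i" "i \<le> length P"
  shows "(\<Sum>c\<leftarrow>take i P # chunks k (drop i P). h c) = h P +
     (\<Sum>j<length P - 1. if i \<le> j + 1 \<and> (j + 1 - i) mod k = 0 then g (P!j) (P!(j+1)) else 0)"
proof (cases "i = length P")
  case True
  have "(\<Sum>j<length P - 1. if i \<le> j + 1 \<and> (j + 1 - i) mod k = 0 then g (P!j) (P!(j+1)) else 0) = 0"
    using True by (intro sum.neutral) auto
  then show ?thesis using True by simp
next
  case False
  then have il: "i < length P" using i by simp
  have split: "h (take i P) + h (drop i P) = h P + g (P ! (i - 1)) (P ! i)"
  proof -
    have "last (take i P) = P ! (i - 1)" using il i by (subst last_conv_nth) auto
    moreover have "hd (drop i P) = P ! i" using il by (simp add: hd_drop_conv_nth)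
    moreover have "P \<noteq> []" "take i P \<noteq> []" "drop i P \<noteq> []" using il i by auto
    ultimately show ?thesis using hg[of "take i P" "drop i P"] by simp
  qed
  have pw: "(if i \<le> j + 1 \<and> (j + 1 - i) mod k = 0 then g (P!j) (P!(j+1)) else 0) =
      (if j = i - 1 then g (P!j) (P!(j+1)) else 0) +
      (if i \<le> j \<and> (j + 1 - i) mod k = 0 then g (P!j) (P!(j+1)) else 0)" for j
    using i by auto
  have "(\<Sum>j<length P - 1. if i \<le> j + 1 \<and> (j + 1 - i) mod k = 0 then g (P!j) (P!(j+1)) else 0) =
      (\<Sum>j<length P - 1. if j = i - 1 then g (P!j) (P!(j+1)) else 0) +
      (\<Sum>j<length P - 1. if i \<le> j \<and> (j + 1 - i) mod k = 0 then g (P!j) (P!(j+1)) else 0)"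
    by (simp only: pw sum.distrib)
  also have "(\<Sum>j<length P - 1. if j = i - 1 then g (P!j) (P!(j+1)) else 0) = g (P ! (i - 1)) (P ! i)"
  proof -
    have m: "i - 1 \<in> {..<length P - 1}" "i - 1 + 1 = i" using il i by auto
    show ?thesis by (subst sum.delta) (auto simp only: m if_True)
  qed
  finally show ?thesis using chunks_sum[OF hg k il] split by simp
qed

lemma avg_sum:
  fixes G :: "nat \<Rightarrow> int"
  assumes k: "0 < k"
  shows "(\<Sum>i\<in>{1..k}. \<Sum>j<m. if i \<le> j + 1 \<and> (j + 1 - i) mod k = 0 then G j else 0) = (\<Sum>j<m. G j)"
proof -
  have pw: "(\<Sum>i\<in>{1..k}. if i \<le> j + 1 \<and> (j + 1 - i) mod k = 0 then G j else 0) = G j" for j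
  proof -
    have "(\<Sum>i\<in>{1..k}. if i \<le> j + 1 \<and> (j + 1 - i) mod k = 0 then G j else 0) =
      (\<Sum>i\<in>{1..k}. if i = j mod k + 1 then G j else 0)"
    proof (rule sum.cong[OF refl])
      fix i assume i: "i \<in> {1..k}"
      have "(i \<le> j + 1 \<and> (j + 1 - i) mod k = 0) \<longleftrightarrow> i = j mod k + 1"
      proof
        assume a: "i \<le> j + 1 \<and> (j + 1 - i) mod k = 0"
        then obtain q where q: "j + 1 - i = k * q" by auto
        then have "j = k * q + (i - 1)" using a i by auto
        then have "j mod k = (i - 1) mod k" by simp
        also have "\<dots> = i - 1" using i by auto
        finally show "i = j mod k + 1" using i by auto
      next
        assume b: "i = j mod k + 1"
        then have "j + 1 - i = k * (j div k)" by (simp add: minus_mod_eq_mult_div)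
        then show "i \<le> j + 1 \<and> (j + 1 - i) mod k = 0" using b by (simp add: mod_le_divisor)
      qed
      then show "(if i \<le> j + 1 \<and> (j + 1 - i) mod k = 0 then G j else 0) = (if i = j mod k + 1 then G j else 0)"
        by simp
    qed
    also have "\<dots> = G j" using k by (simp add: sum.delta Suc_leI)
    finally show ?thesis .
  qed
  show ?thesis by (subst sum.swap) (simp only: pw)
qed



lemma card_spread:
  fixes X :: "int set" and M :: int
  assumes "\<forall>x\<in>X. \<forall>y\<in>X. x \<noteq> y \<longrightarrow> 2 \<le> \<bar>x - y\<bar>" "\<forall>x\<in>X. \<bar>x\<bar> \<le> M" "X \<noteq> {}"
  shows "int (card X) \<le> M + 1"
proof -
  from assms(3) obtain x where "x \<in> X" by auto
  then have M0: "0 \<le> M" using assms(2) by fastforce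
  have inj: "inj_on (\<lambda>x. (x + M) div 2) X"
  proof (rule inj_onI, rule ccontr)
    fix x y assume "x \<in> X" "y \<in> X" "(x + M) div 2 = (y + M) div 2" "x \<noteq> y"
    then have "2 \<le> \<bar>x - y\<bar>" using assms(1) by blast
    moreover have "\<bar>(x + M) - (y + M)\<bar> \<le> 1" using \<open>(x + M) div 2 = (y + M) div 2\<close> by presburger
    ultimately show False by simp
  qed
  have sub: "(\<lambda>x. (x + M) div 2) ` X \<subseteq> {0..M}"
  proof
    fix y assume "y \<in> (\<lambda>x. (x + M) div 2) ` X"
    then obtain x where x: "x \<in> X" "y = (x + M) div 2" by auto
    then have "\<bar>x\<bar> \<le> M" using assms(2) by auto
    then have "0 \<le> x + M" "x + M \<le> 2 * M" by auto
    then have "0 \<le> (x + M) div 2" "(x + M) div 2 \<le> (2 * M) div 2" by (auto intro: zdiv_mono1)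
    then show "y \<in> {0..M}" using x by simp
  qed
  have "card X = card ((\<lambda>x. (x + M) div 2) ` X)" using inj by (simp add: card_image)
  also have "\<dots> \<le> card {0..M}" using sub by (intro card_mono) auto
  finally show ?thesis using M0 by simp
qed

lemma spread_sum:
  fixes X :: "int set"
  shows "finite X \<Longrightarrow> \<forall>x\<in>X. \<forall>y\<in>X. x \<noteq> y \<longrightarrow> 2 \<le> \<bar>x - y\<bar> \<Longrightarrow>
    int (card X) * (int (card X) - 1) \<le> 2 * (\<Sum>x\<in>X. \<bar>x\<bar>)"
proof (induction "card X" arbitrary: X rule: less_induct)
  case less
  show ?case
  proof (cases "X = {}")
    case True then show ?thesis by simp
  next
    case False
    define M where "M = Max (abs ` X)"
    have "M \<in> abs ` X" unfolding M_def using False less.prems by (intro Max_in) auto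
    then obtain x0 where x0: "x0 \<in> X" "\<bar>x0\<bar> = M" by auto
    have Mge: "\<forall>x\<in>X. \<bar>x\<bar> \<le> M" unfolding M_def using less.prems by auto
    have c: "int (card X) \<le> M + 1" using card_spread[OF less.prems(2) Mge False] .
    have cX: "card X = Suc (card (X - {x0}))" using x0 less.prems
      by (metis card_Suc_Diff1)
    have IH: "int (card (X - {x0})) * (int (card (X - {x0})) - 1) \<le> 2 * (\<Sum>x\<in>X - {x0}. \<bar>x\<bar>)"
      using less.hyps[of "X - {x0}"] cX less.prems by auto
    have s: "(\<Sum>x\<in>X. \<bar>x\<bar>) = M + (\<Sum>x\<in>X - {x0}. \<bar>x\<bar>)"
      using x0 less.prems by (simp add: sum.remove)
    define c where "c = int (card (X - {x0}))"
    have "int (card X) = c + 1" using cX c_def by simp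
    then show ?thesis using IH s c unfolding c_def[symmetric]
      by (simp add: algebra_simps)
  qed
qed

context graph
begin

lemma tour_lb:
  assumes t: "tour E V dep t" and T: "T \<subseteq> V" "T \<subseteq> set t" and dep: "dep \<notin> V"
  shows "4 * (\<Sum>v\<in>T. int (gdist E V dep dep v)) \<le>
      2 * int (card T) * int (walk_cost t) - int (card T) * (int (card T) - 1)"
    and "card T \<le> walk_cost t"
proof -
  define L where "L = walk_cost t"
  have w: "walk E V dep t" "hd t = dep" "last t = dep" using t unfolding tour_def by auto
  have tne: "t \<noteq> []" using w unfolding walk_def by auto
  have lenL: "length t = L + 1" using tne unfolding L_def walk_cost_def by simp
  define pos where "pos v = (SOME i. i < length t \<and> t ! i = v)" for v
  have pos: "pos v < length t \<and> t ! pos v = v" if "v \<in> T" for v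
  proof -
    have "\<exists>i. i < length t \<and> t ! i = v" using T that by (auto simp: in_set_conv_nth)
    then show ?thesis unfolding pos_def by (rule someI_ex)
  qed
  have t0: "t ! 0 = dep" using w tne by (simp add: hd_conv_nth)
  have tL: "t ! L = dep" using w tne lenL by (simp add: last_conv_nth)
  have posr: "0 < pos v \<and> pos v < L" if "v \<in> T" for v
  proof -
    have "v \<noteq> dep" using that T dep by auto
    then have "pos v \<noteq> 0" "pos v \<noteq> L" using pos[OF that] t0 tL by metis+
    then show ?thesis using pos[OF that] lenL by auto
  qed
  have inj: "inj_on pos T" by (rule inj_onI) (metis pos)
  have d1: "gdist E V dep dep v \<le> pos v" if "v \<in> T" for v
  proof -
    have "pos v < length t" using pos[OF that] by simp
    note ws = walk_sub[OF w(1), of 0 "pos v", OF _ this]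
    have "gdist E V dep dep v \<le> walk_cost (take (pos v - 0 + 1) (drop 0 t))"
      by (rule gdist_le[OF ws(1)]) (use ws t0 pos[OF that] in auto)
    then show ?thesis using ws(4) by simp
  qed
  have d2: "gdist E V dep dep v \<le> L - pos v" if "v \<in> T" for v
  proof -
    have "pos v \<le> L" "L < length t" using posr[OF that] lenL by auto
    note ws = walk_sub[OF w(1) this]
    have "gdist E V dep v dep \<le> walk_cost (take (L - pos v + 1) (drop (pos v) t))"
      by (rule gdist_le[OF ws(1)]) (use ws tL pos[OF that] in auto)
    then have "gdist E V dep v dep \<le> L - pos v" using ws(4) by simp
    moreover have "gdist E V dep v dep = gdist E V dep dep v" using that T by (intro gdist_sym) auto
    ultimately show ?thesis by simp
  qed
  define x where "x v = 2 * int (pos v) - int L" for v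
  have dx: "2 * int (gdist E V dep dep v) \<le> int L - \<bar>x v\<bar>" if "v \<in> T" for v
    using d1[OF that] d2[OF that] posr[OF that] unfolding x_def by auto
  have injx: "inj_on x T" using inj unfolding x_def inj_on_def by auto
  have finT: "finite T" using T(2) finite_subset by blast
  have spread: "\<forall>a\<in>x ` T. \<forall>b\<in>x ` T. a \<noteq> b \<longrightarrow> 2 \<le> \<bar>a - b\<bar>"
    unfolding x_def by auto
  have sp: "int (card T) * (int (card T) - 1) \<le> 2 * (\<Sum>v\<in>T. \<bar>x v\<bar>)"
    using spread_sum[OF finite_imageI[OF finT] spread] injx
    by (simp add: card_image sum.reindex)
  have "(\<Sum>v\<in>T. 2 * int (gdist E V dep dep v)) \<le> (\<Sum>v\<in>T. int L - \<bar>x v\<bar>)"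
    using dx by (intro sum_mono) auto
  then have "2 * (\<Sum>v\<in>T. int (gdist E V dep dep v)) \<le> int (card T) * int L - (\<Sum>v\<in>T. \<bar>x v\<bar>)"
    by (simp add: sum_distrib_left sum_subtractf)
  then show "4 * (\<Sum>v\<in>T. int (gdist E V dep dep v)) \<le>
      2 * int (card T) * int (walk_cost t) - int (card T) * (int (card T) - 1)"
    using sp unfolding L_def by linarith
  have "pos ` T \<subseteq> {1..<L}" using posr by (auto simp: Suc_le_eq)
  then have "card (pos ` T) \<le> card {1..<L}" by (intro card_mono) auto
  then show "card T \<le> walk_cost t" using inj by (simp add: card_image L_def)
qed

end


lemma per_ineq:
  fixes \<beta> c s L k :: real
  assumes "4 * s \<le> 2 * c * L - c * (c - 1)" "c \<le> L" "c \<le> k" "1/2 \<le> \<beta>" "0 \<le> c"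
  shows "(k - 1) * \<beta> * c + 2 * s \<le> (\<beta> + 1/2) * k * L"
proof -
  have h1: "0 \<le> (\<beta> - 1/2) * (k * (L - c) + c)"
    using assms by (intro mult_nonneg_nonneg) auto
  have h2: "0 \<le> (k - c) * (2 * L - c)" using assms by (intro mult_nonneg_nonneg) auto
  have eq: "(\<beta> + 1/2) * k * L - ((k - 1) * \<beta> * c + 2 * s) = (\<beta> - 1/2) * (k * (L - c) + c)
     + (1/2) * ((k - c) * (2 * L - c)) + ((2 * c * L - c * (c - 1)) / 2 - 2 * s)"
    by (simp add: field_simps)
  define A where "A = (\<beta> - 1/2) * (k * (L - c) + c)"
  define B where "B = (k - c) * (2 * L - c)"
  define Y where "Y = 2 * c * L - c * (c - 1)"
  define Z where "Z = (\<beta> + 1/2) * k * L"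
  define W where "W = (k - 1) * \<beta> * c"
  have "0 \<le> A" "0 \<le> B" "4 * s \<le> Y" "Z - (W + 2 * s) = A + 1/2 * B + (Y / 2 - 2 * s)"
    using h1 h2 assms(1) eq unfolding A_def B_def Y_def Z_def W_def by auto
  then have "W + 2 * s \<le> Z" by linarith
  then show ?thesis unfolding W_def Z_def .
qed

fun cw :: "'a \<Rightarrow> 'a list list \<Rightarrow> 'a list" where
  "cw dep [] = [dep]"
| "cw dep (t # ts) = t @ tl (cw dep ts)"

lemma cw_props:
  assumes "\<forall>t\<in>set ts. tour E V dep t"
  shows "tour E V dep (cw dep ts) \<and> walk_cost (cw dep ts) = sum_list (map walk_cost ts) \<and>
    set (cw dep ts) = insert dep (\<Union>t\<in>set ts. set t)"
  using assms
proof (induction ts)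
  case Nil
  then show ?case by (simp add: tour_def walk_def walk_cost_def)
next
  case (Cons t ts)
  have t: "walk E V dep t" "hd t = dep" "last t = dep" using Cons.prems unfolding tour_def by auto
  have r: "walk E V dep (cw dep ts)" "hd (cw dep ts) = dep" "last (cw dep ts) = dep"
    "walk_cost (cw dep ts) = sum_list (map walk_cost ts)"
    "set (cw dep ts) = insert dep (\<Union>t\<in>set ts. set t)"
    using Cons unfolding tour_def by auto
  have l: "last t = hd (cw dep ts)" using t r by simp
  note wa = walk_append[OF t(1) r(1) l]
  have ne: "t \<noteq> []" "cw dep ts \<noteq> []" using t(1) r(1) unfolding walk_def by auto
  have "set (cw dep (t # ts)) = set t \<union> set (cw dep ts)" using set_append_tl[OF ne l] by simp
  moreover have "dep \<in> set t" using t ne by (metis hd_in_set)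
  ultimately show ?case using wa r t unfolding tour_def by auto
qed

lemma int_sum_list: "int (sum_list xs) = sum_list (map int xs)"
  by (induction xs) auto

context graph
begin

lemma tsp_le:
  assumes "cvrp_feasible E V dep k sol"
  shows "tsp_opt E V dep \<le> sol_cost sol"
proof -
  have tours: "\<forall>t\<in>set (fst sol). tour E V dep t" using assms unfolding cvrp_feasible_def by auto
  note c = cw_props[OF tours]
  have "V \<subseteq> (\<Union>t\<in>set (fst sol). set t)"
  proof
    fix v assume "v \<in> V"
    then have "snd sol v < length (fst sol)" "v \<in> set (fst sol ! snd sol v)"
      using assms unfolding cvrp_feasible_def by auto
    then show "v \<in> (\<Union>t\<in>set (fst sol). set t)" by auto
  qed
  then have "tsp_tour E V dep (cw dep (fst sol))" using c unfolding tsp_tour_def by auto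
  then have "tsp_opt E V dep \<le> walk_cost (cw dep (fst sol))"
    unfolding tsp_opt_def by (intro Least_le) blast
  then show ?thesis using c unfolding sol_cost_def by simp
qed

lemma sol_lb:
  assumes feas: "cvrp_feasible E V dep k sol" and fin: "finite V" and dep: "dep \<notin> V"
    and b: "1/2 \<le> \<beta>"
  shows "(real k - 1) * \<beta> * real (card V) + 2 * (\<Sum>v\<in>V. real (gdist E V dep dep v))
    \<le> (\<beta> + 1/2) * real k * real (sol_cost sol)"
proof -
  define ts where "ts = fst sol"
  define a where "a = snd sol"
  define m where "m = length ts"
  define T where "T j = {v\<in>V. a v = j}" for j
  define d where "d v = real (gdist E V dep dep v)" for v
  have F: "\<forall>t\<in>set ts. tour E V dep t" "\<forall>v\<in>V. a v < m \<and> v \<in> set (ts ! a v)"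
    "\<forall>j<m. card (T j) \<le> k"
    using feas unfolding cvrp_feasible_def ts_def a_def m_def T_def by auto
  have img: "a ` V \<subseteq> {..<m}" using F by auto
  have cardV: "real (card V) = (\<Sum>j<m. real (card (T j)))"
  proof -
    have "(\<Sum>j<m. \<Sum>v | v \<in> V \<and> a v = j. (1::real)) = (\<Sum>v\<in>V. 1)"
      by (rule sum.group[OF fin _ img]) simp
    then show ?thesis unfolding T_def by simp
  qed
  have sumV: "(\<Sum>v\<in>V. d v) = (\<Sum>j<m. \<Sum>v\<in>T j. d v)"
    unfolding T_def by (rule sum.group[OF fin _ img, symmetric]) simp
  have cost: "real (sol_cost sol) = (\<Sum>j<m. real (walk_cost (ts ! j)))"
    unfolding sol_cost_def ts_def[symmetric] m_def
    by (simp add: sum_list_sum_nth atLeast0LessThan of_nat_sum)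
  have per: "(real k - 1) * \<beta> * real (card (T j)) + 2 * (\<Sum>v\<in>T j. d v)
      \<le> (\<beta> + 1/2) * real k * real (walk_cost (ts ! j))" if j: "j < m" for j
  proof -
    have tj: "tour E V dep (ts ! j)" using F j by (simp add: m_def)
    have TV: "T j \<subseteq> V" "T j \<subseteq> set (ts ! j)" using F unfolding T_def by auto
    note lb = tour_lb[OF tj TV dep]
    have "real_of_int (4 * (\<Sum>v\<in>T j. int (gdist E V dep dep v))) \<le>
      real_of_int (2 * int (card (T j)) * int (walk_cost (ts ! j)) - int (card (T j)) * (int (card (T j)) - 1))"
      using lb(1) by (simp only: of_int_le_iff)
    then have i1: "4 * (\<Sum>v\<in>T j. d v) \<le> 2 * real (card (T j)) * real (walk_cost (ts ! j))
       - real (card (T j)) * (real (card (T j)) - 1)"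
      unfolding d_def by (simp add: of_int_sum)
    show ?thesis
      by (rule per_ineq[OF i1]) (use lb(2) F j b in auto)
  qed
  have "(\<Sum>j<m. (real k - 1) * \<beta> * real (card (T j)) + 2 * (\<Sum>v\<in>T j. d v))
      \<le> (\<Sum>j<m. (\<beta> + 1/2) * real k * real (walk_cost (ts ! j)))"
    using per by (intro sum_mono) auto
  then show ?thesis
    unfolding cardV sumV[unfolded d_def] cost d_def
    by (simp add: sum.distrib sum_distrib_left)
qed

end


lemma sorted_hd_last:
  assumes "sorted_wrt (<) (c :: nat list)" "c \<noteq> []" "x \<in> set c"
  shows "hd c \<le> x \<and> x \<le> last c"
proof
  show "hd c \<le> x" using assms by (cases c) auto
  have "c = butlast c @ [last c]" using assms by simp
  then have "sorted_wrt (<) (butlast c @ [last c])" using assms by simp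
  then have "\<forall>y\<in>set (butlast c). y < last c" by (simp add: sorted_wrt_append)
  moreover have "x \<in> set (butlast c) \<or> x = last c" using assms
    by (metis \<open>c = butlast c @ [last c]\<close> in_set_conv_decomp last_in_set rotate1.simps(2) set_rotate1 in_set_butlast_appendI Un_iff set_append empty_iff empty_set set_ConsD)
  ultimately show "x \<le> last c" by auto
qed

lemma sorted_concat_mem:
  assumes "sorted_wrt (<) (concat cs)" "c \<in> set cs"
  shows "sorted_wrt (<) c"
proof -
  obtain us ws where "cs = us @ c # ws" using assms(2) by (meson split_list)
  then show ?thesis using assms(1) by (simp add: sorted_wrt_append)
qed

locale itp_set = graph E V dep for E :: "'a \<Rightarrow> 'a \<Rightarrow> bool" and V dep +
  fixes S :: "'a list" and k :: nat
  assumes fin: "finite V" and dep: "dep \<notin> V" and tsp: "tsp_tour E V dep S"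
    and k1: "1 \<le> k" and kn: "k \<le> card V"
begin

abbreviation "P \<equiv> first_positions V S"
abbreviation "d v \<equiv> gdist E V dep dep v"

lemma VS: "V \<subseteq> set S" using tsp unfolding tsp_tour_def by auto

lemma P_len: "length P = card V" using fp_length[OF fin VS] .

lemma P_mem: "p \<in> set P \<Longrightarrow> p < length S \<and> S ! p \<in> V" by (simp add: fp_mem)

lemma P_img: "(!) S ` set P = V" using fp_image[of S V] VS by auto

lemma S_walk: "walk E V dep S" "hd S = dep" "last S = dep"
  using tsp unfolding tsp_tour_def tour_def by auto

lemma segs_facts:
  assumes i: "i \<in> {1..k}"
  shows "concat (itp_segments V k S i) = P"
    "\<forall>c\<in>set (itp_segments V k S i). c \<noteq> [] \<and> length c \<le> k \<and> sorted_wrt (<) c \<and> set c \<subseteq> set P"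
proof -
  have k0: "0 < k" using k1 by simp
  have Pne: "P \<noteq> []" using P_len k1 kn by auto
  note ch = chunks_props[OF k0, of "drop i P"]
  show cc: "concat (itp_segments V k S i) = P"
    unfolding itp_segments_def Let_def using ch by simp
  show "\<forall>c\<in>set (itp_segments V k S i). c \<noteq> [] \<and> length c \<le> k \<and> sorted_wrt (<) c \<and> set c \<subseteq> set P"
  proof
    fix c assume c: "c \<in> set (itp_segments V k S i)"
    have "sorted_wrt (<) c" using sorted_concat_mem[of "itp_segments V k S i" c] cc fp_sorted[of V S] c by simp
    moreover have "set c \<subseteq> set P" using c cc by (metis Sup_upper set_concat image_eqI)
    moreover have "c \<noteq> [] \<and> length c \<le> k" using c ch i Pne unfolding itp_segments_def Let_def by auto
    ultimately show "c \<noteq> [] \<and> length c \<le> k \<and> sorted_wrt (<) c \<and> set c \<subseteq> set P" by blast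
  qed
qed

lemma seg_tour:
  assumes c: "c \<noteq> []" "sorted_wrt (<) c" "set c \<subseteq> set P"
  shows "tour E V dep (segment_tour E V dep S c)"
    "walk_cost (segment_tour E V dep S c) = d (S ! hd c) + (last c - hd c) + d (S ! last c)"
    "(!) S ` set c \<subseteq> set (segment_tour E V dep S c)"
    "hd c \<le> last c"
proof -
  define a where "a = hd c"
  define b where "b = last c"
  have ab: "a \<le> b" using sorted_hd_last[OF c(2,1)] c unfolding a_def b_def by auto
  then show "hd c \<le> last c" unfolding a_def b_def .
  have aP: "a \<in> set P" "b \<in> set P" using c unfolding a_def b_def by auto
  have bS: "b < length S" "S ! a \<in> V" "S ! b \<in> V" using P_mem aP by auto
  define p1 where "p1 = shortest_path E V dep dep (S ! a)"
  define q where "q = take (b - a + 1) (drop a S)"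
  define p2 where "p2 = shortest_path E V dep (S ! b) dep"
  have st: "segment_tour E V dep S c = (p1 @ tl q) @ tl p2"
    unfolding segment_tour_def Let_def p1_def q_def p2_def a_def b_def by simp
  have P1: "walk E V dep p1" "hd p1 = dep" "last p1 = S ! a" "walk_cost p1 = d (S ! a)"
    using shortest[of dep "S ! a"] bS unfolding p1_def by auto
  have P2: "walk E V dep p2" "hd p2 = S ! b" "last p2 = dep" "walk_cost p2 = gdist E V dep (S ! b) dep"
    using shortest[of "S ! b" dep] bS unfolding p2_def by auto
  have P2': "gdist E V dep (S ! b) dep = d (S ! b)" using bS by (intro gdist_sym) auto
  note Q = walk_sub[OF S_walk(1) ab bS(1), folded q_def]
  have l1: "last p1 = hd q" using P1 Q by simp
  note W1 = walk_append[OF P1(1) Q(1) l1]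
  have l2: "last (p1 @ tl q) = hd p2" using W1 Q P2 by simp
  note W2 = walk_append[OF W1(1) P2(1) l2]
  show "tour E V dep (segment_tour E V dep S c)" unfolding st tour_def using W2 W1 P1 P2 by simp
  show "walk_cost (segment_tour E V dep S c) = d (S ! hd c) + (last c - hd c) + d (S ! last c)"
    unfolding st using W2 W1 P1 P2 P2' Q unfolding a_def b_def by simp
  have ne: "p1 \<noteq> []" "q \<noteq> []" "p1 @ tl q \<noteq> []" "p2 \<noteq> []" using P1 Q W1 P2 unfolding walk_def by auto
  have "set q \<subseteq> set (segment_tour E V dep S c)"
    unfolding st using set_append_tl[OF ne(1,2) l1] set_append_tl[OF ne(3,4) l2] by auto
  moreover have "(!) S ` set c \<subseteq> set q"
  proof
    fix v assume "v \<in> (!) S ` set c"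
    then obtain p where p: "p \<in> set c" "v = S ! p" by auto
    have "a \<le> p" "p \<le> b" using sorted_hd_last[OF c(2,1) p(1)] unfolding a_def b_def by auto
    then have "q ! (p - a) = S ! p" "p - a < length q" unfolding q_def using bS by auto
    then show "v \<in> set q" using p by (metis nth_mem)
  qed
  ultimately show "(!) S ` set c \<subseteq> set (segment_tour E V dep S c)" by blast
qed

end


context itp_set
begin

lemma asg_ex:
  assumes i: "i \<in> {1..k}" and v: "v \<in> V"
  shows "\<exists>m. m < length (itp_segments V k S i) \<and> v \<in> (!) S ` set (itp_segments V k S i ! m)"
proof -
  note sf = segs_facts[OF i]
  obtain p where p: "p \<in> set P" "v = S ! p" using P_img v by auto
  then have "p \<in> set (concat (itp_segments V k S i))" using sf by simp
  then obtain c where c: "c \<in> set (itp_segments V k S i)" "p \<in> set c" by auto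
  then obtain m where "m < length (itp_segments V k S i)" "itp_segments V k S i ! m = c"
    by (meson in_set_conv_nth)
  then show ?thesis using c p by auto
qed

lemma itp_feasible:
  assumes i: "i \<in> {1..k}"
  shows "cvrp_feasible E V dep k (itp_solution E V dep k S i)"
proof -
  define segs where "segs = itp_segments V k S i"
  define asg where "asg v = (LEAST m. m < length segs \<and> v \<in> (!) S ` set (segs ! m))" for v
  have sol: "itp_solution E V dep k S i = (map (segment_tour E V dep S) segs, asg)"
    unfolding itp_solution_def Let_def segs_def asg_def by simp
  note sf = segs_facts[OF i, folded segs_def]
  have A: "asg v < length segs \<and> v \<in> (!) S ` set (segs ! asg v)" if "v \<in> V" for v
    unfolding asg_def by (rule LeastI_ex) (use asg_ex[OF i that] segs_def in simp)
  show ?thesis unfolding sol cvrp_feasible_def fst_conv snd_conv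
  proof (intro conjI ballI allI impI)
    fix t assume "t \<in> set (map (segment_tour E V dep S) segs)"
    then obtain c where "c \<in> set segs" "t = segment_tour E V dep S c" by auto
    then show "tour E V dep t" using seg_tour(1) sf(2) by auto
  next
    fix v assume v: "v \<in> V"
    show "asg v < length (map (segment_tour E V dep S) segs)" using A[OF v] by simp
    have "segs ! asg v \<in> set segs" using A[OF v] by simp
    then have "(!) S ` set (segs ! asg v) \<subseteq> set (segment_tour E V dep S (segs ! asg v))"
      using seg_tour(3) sf(2) by auto
    then show "v \<in> set (map (segment_tour E V dep S) segs ! asg v)" using A[OF v] by auto
  next
    fix j assume j: "j < length (map (segment_tour E V dep S) segs)"
    then have jc: "segs ! j \<in> set segs" by simp
    have "{v \<in> V. asg v = j} \<subseteq> (!) S ` set (segs ! j)" using A by auto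
    then have "card {v \<in> V. asg v = j} \<le> card ((!) S ` set (segs ! j))" by (intro card_mono) auto
    also have "\<dots> \<le> card (set (segs ! j))" by (rule card_image_le) simp
    also have "\<dots> \<le> length (segs ! j)" by (rule card_length)
    also have "\<dots> \<le> k" using sf(2) jc by auto
    finally show "card {v \<in> V. asg v = j} \<le> k" .
  qed
qed

definition hh :: "nat list \<Rightarrow> int" where
  "hh c = int (d (S ! hd c)) + int (last c) - int (hd c) + int (d (S ! last c))"

definition gg :: "nat \<Rightarrow> nat \<Rightarrow> int" where
  "gg a b = int (d (S ! a)) + int (d (S ! b)) - (int b - int a)"

lemma hg: "ys \<noteq> [] \<Longrightarrow> zs \<noteq> [] \<Longrightarrow> hh ys + hh zs = hh (ys @ zs) + gg (last ys) (hd zs)"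
  unfolding hh_def gg_def by simp

lemma itp_cost:
  assumes i: "i \<in> {1..k}"
  shows "int (sol_cost (itp_solution E V dep k S i)) = hh P +
     (\<Sum>j<length P - 1. if i \<le> j + 1 \<and> (j + 1 - i) mod k = 0 then gg (P!j) (P!(j+1)) else 0)"
proof -
  define segs where "segs = itp_segments V k S i"
  note sf = segs_facts[OF i, folded segs_def]
  have "int (sol_cost (itp_solution E V dep k S i)) = sum_list (map (\<lambda>c. int (walk_cost (segment_tour E V dep S c))) segs)"
    unfolding itp_solution_def Let_def sol_cost_def segs_def[symmetric]
    by (simp add: int_sum_list o_def)
  also have "\<dots> = sum_list (map hh segs)"
  proof (rule arg_cong[where f = sum_list], rule map_cong[OF refl])
    fix c assume "c \<in> set segs"
    then have "c \<noteq> []" "sorted_wrt (<) c" "set c \<subseteq> set P" using sf by auto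
    note st = seg_tour[OF this]
    show "int (walk_cost (segment_tour E V dep S c)) = hh c"
      unfolding st(2) hh_def using st(4) by simp
  qed
  also have "\<dots> = hh P +
     (\<Sum>j<length P - 1. if i \<le> j + 1 \<and> (j + 1 - i) mod k = 0 then gg (P!j) (P!(j+1)) else 0)"
    unfolding segs_def itp_segments_def Let_def
    by (rule segs_sum[OF hg]) (use i k1 kn P_len in auto)
  finally show ?thesis .
qed

end


context itp_set
begin

lemma sumD: "(\<Sum>j<length P. int (d (S ! (P ! j)))) = (\<Sum>v\<in>V. int (d v))"
proof -
  have "(\<Sum>j<length P. int (d (S ! (P ! j)))) = sum_list (map (\<lambda>p. int (d (S ! p))) P)"
    by (simp add: sum_list_sum_nth atLeast0LessThan)
  also have "\<dots> = sum_list (map (\<lambda>v. int (d v)) (map ((!) S) P))" by (simp add: o_def)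
  also have "\<dots> = (\<Sum>v\<in>set (map ((!) S) P). int (d v))"
    by (rule sum_list_distinct_conv_sum_set[OF fp_distinct])
  also have "set (map ((!) S) P) = V" using P_img by simp
  finally show ?thesis .
qed

lemma hP_le: "hh P \<le> int (walk_cost S)"
proof -
  have Pne: "P \<noteq> []" using P_len k1 kn by auto
  define M where "M = length P - 1"
  have M: "M < length P" using Pne M_def by simp
  have hdP: "hd P = P ! 0" "last P = P ! M" using Pne M_def by (auto simp: hd_conv_nth last_conv_nth)
  have p0: "P ! 0 \<in> set P" "P ! M \<in> set P" using M Pne by auto
  then have pS: "P ! 0 < length S" "S ! (P ! 0) \<in> V" "P ! M < length S" "S ! (P ! M) \<in> V"
    using P_mem by auto
  have lenS: "length S = walk_cost S + 1" using S_walk unfolding walk_def walk_cost_def by auto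
  note w1 = walk_sub[OF S_walk(1), of 0 "P ! 0"]
  have "d (S ! (P ! 0)) \<le> walk_cost (take (P ! 0 - 0 + 1) (drop 0 S))"
    by (rule gdist_le[OF w1(1)]) (use w1 pS S_walk in \<open>auto simp: hd_conv_nth\<close>)
  then have d0: "d (S ! (P ! 0)) \<le> P ! 0" using w1(4) pS by simp
  have "P ! M \<le> walk_cost S" "walk_cost S < length S" using pS lenS by auto
  note w2 = walk_sub[OF S_walk(1) this]
  have "S \<noteq> []" using S_walk unfolding walk_def by auto
  then have "last S = S ! (length S - 1)" by (rule last_conv_nth)
  then have lastS: "S ! walk_cost S = dep" using lenS S_walk(3) by simp
  have "gdist E V dep (S ! (P ! M)) dep \<le> walk_cost (take (walk_cost S - P ! M + 1) (drop (P ! M) S))"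
    by (rule gdist_le[OF w2(1)]) (use w2 pS lastS in auto)
  moreover have "gdist E V dep (S ! (P ! M)) dep = d (S ! (P ! M))" using pS by (intro gdist_sym) auto
  ultimately have dM: "d (S ! (P ! M)) \<le> walk_cost S - P ! M" using w2(4) by simp
  show ?thesis unfolding hh_def hdP using d0 dM \<open>P ! M \<le> walk_cost S\<close> by linarith
qed

lemma total:
  "(\<Sum>i\<in>{1..k}. int (sol_cost (itp_solution E V dep k S i))) = (int k - 1) * hh P + 2 * (\<Sum>v\<in>V. int (d v))"
proof -
  have k0: "0 < k" using k1 by simp
  define N where "N = length P"
  define M where "M = N - 1"
  have NM: "N = Suc M" using P_len k1 kn unfolding N_def M_def by auto
  define D where "D j = int (d (S ! (P ! j)))" for j
  have "(\<Sum>i\<in>{1..k}. int (sol_cost (itp_solution E V dep k S i))) =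
      (\<Sum>i\<in>{1..k}. hh P + (\<Sum>j<length P - 1. if i \<le> j + 1 \<and> (j + 1 - i) mod k = 0 then gg (P!j) (P!(j+1)) else 0))"
    by (rule sum.cong[OF refl]) (rule itp_cost)
  also have "\<dots> = int k * hh P + (\<Sum>j<M. gg (P!j) (P!(j+1)))"
    unfolding sum.distrib avg_sum[OF k0] by (simp add: M_def N_def)
  also have "(\<Sum>j<M. gg (P!j) (P!(j+1))) = (\<Sum>j<M. D j) + (\<Sum>j<M. D (Suc j)) - (\<Sum>j<M. int (P ! Suc j) - int (P ! j))"
    unfolding gg_def D_def by (simp add: sum.distrib sum_subtractf)
  also have "(\<Sum>j<M. int (P ! Suc j) - int (P ! j)) = int (P ! M) - int (P ! 0)"
    by (rule sum_lessThan_telescope)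
  also have "(\<Sum>j<M. D j) = (\<Sum>j<N. D j) - D M" unfolding NM by simp
  also have "(\<Sum>j<M. D (Suc j)) = (\<Sum>j<N. D j) - D 0" unfolding NM sum.lessThan_Suc_shift by simp
  also have "(\<Sum>j<N. D j) = (\<Sum>v\<in>V. int (d v))" unfolding D_def N_def by (rule sumD)
  finally have X: "(\<Sum>i\<in>{1..k}. int (sol_cost (itp_solution E V dep k S i))) = int k * hh P +
     ((\<Sum>v\<in>V. int (d v)) - D M + ((\<Sum>v\<in>V. int (d v)) - D 0) - (int (P ! M) - int (P ! 0)))" .
  have hhP: "hh P = D 0 + int (P ! M) - int (P ! 0) + D M"
  proof -
    have "P \<noteq> []" using NM N_def by auto
    then have "hd P = P ! 0" "last P = P ! M" using NM N_def by (auto simp: hd_conv_nth last_conv_nth)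
    then show ?thesis unfolding hh_def D_def by simp
  qed
  show ?thesis unfolding X hhP by (simp add: algebra_simps)
qed

end


context itp_set
begin

lemma main:
  fixes \<beta> \<gamma> :: real
  assumes b: "1/2 \<le> \<beta>" and g: "0 \<le> \<gamma>"
    and LS: "real (walk_cost S) \<le> \<beta> * real (card V) + \<gamma> * real (tsp_opt E V dep)"
  shows "cvrp_feasible E V dep k (itp E V dep k S) \<and>
    real (sol_cost (itp E V dep k S)) \<le> (\<beta> + \<gamma> + 1/2) * real (cvrp_opt E V dep k)"
proof -
  define f where "f i = sol_cost (itp_solution E V dep k S i)" for i
  define i0 where "i0 = (ARG_MIN f i. i \<in> {1..k})"
  have itp_eq: "itp E V dep k S = itp_solution E V dep k S i0" unfolding itp_def i0_def f_def ..
  have am: "is_arg_min f (\<lambda>i. i \<in> {1..k}) i0" unfolding i0_def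
    by (rule is_arg_min_arg_min_nat[of _ 1]) (use k1 in auto)
  then have i0: "i0 \<in> {1..k}" "\<forall>i\<in>{1..k}. f i0 \<le> f i" unfolding is_arg_min_linorder by auto
  have feas: "cvrp_feasible E V dep k (itp E V dep k S)" unfolding itp_eq by (rule itp_feasible[OF i0(1)])
  have "\<exists>sol. cvrp_feasible E V dep k sol \<and> sol_cost sol = cvrp_opt E V dep k"
    unfolding cvrp_opt_def by (rule LeastI_ex) (use feas in blast)
  then obtain sol where sol: "cvrp_feasible E V dep k sol" "sol_cost sol = cvrp_opt E V dep k" by blast
  define C where "C = f i0"
  define opt where "opt = real (cvrp_opt E V dep k)"
  define DV where "DV = (\<Sum>v\<in>V. real (d v))"
  define L where "L = real (walk_cost S)"
  define T where "T = real (tsp_opt E V dep)"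
  define n where "n = real (card V)"
  define K where "K = real k"
  have "of_nat (card {1..k}) * int C \<le> (\<Sum>i\<in>{1..k}. int (f i))"
    by (rule sum_bounded_below) (use i0 C_def in auto)
  then have "int k * int C \<le> (int k - 1) * hh P + 2 * (\<Sum>v\<in>V. int (d v))"
    using total unfolding f_def by simp
  also have "(int k - 1) * hh P \<le> (int k - 1) * int (walk_cost S)"
    using hP_le k1 by (intro mult_left_mono) auto
  finally have "real_of_int (int k * int C) \<le> real_of_int ((int k - 1) * int (walk_cost S) + 2 * (\<Sum>v\<in>V. int (d v)))"
    by (simp only: of_int_le_iff)
  then have s1: "K * real C \<le> (K - 1) * L + 2 * DV"
    unfolding K_def L_def DV_def by (simp add: of_int_sum)
  have s2: "(K - 1) * \<beta> * n + 2 * DV \<le> (\<beta> + 1/2) * K * opt"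
    using sol_lb[OF sol(1) fin dep b] sol(2) unfolding K_def n_def DV_def opt_def by simp
  have s3: "T \<le> opt" using tsp_le[OF sol(1)] sol(2) unfolding T_def opt_def by simp
  have K1: "1 \<le> K" using k1 unfolding K_def by simp
  have s4: "(K - 1) * L \<le> (K - 1) * (\<beta> * n + \<gamma> * T)"
    using LS K1 unfolding L_def n_def T_def by (intro mult_left_mono) auto
  have s5: "(K - 1) * (\<gamma> * T) \<le> K * (\<gamma> * opt)"
  proof -
    have "\<gamma> * T \<le> \<gamma> * opt" using s3 g by (intro mult_left_mono) auto
    moreover have "0 \<le> \<gamma> * T" using g unfolding T_def by simp
    moreover have "(K - 1) * (\<gamma> * T) = K * (\<gamma> * T) - \<gamma> * T" by (simp add: left_diff_distrib)
    moreover have "K * (\<gamma> * T) \<le> K * (\<gamma> * opt)" using K1 \<open>\<gamma> * T \<le> \<gamma> * opt\<close> by (rule_tac mult_left_mono) auto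
    ultimately show ?thesis by linarith
  qed
  have e1: "(K - 1) * (\<beta> * n + \<gamma> * T) = (K - 1) * \<beta> * n + (K - 1) * (\<gamma> * T)" by (simp add: algebra_simps)
  have e2: "K * ((\<beta> + \<gamma> + 1/2) * opt) = (\<beta> + 1/2) * K * opt + K * (\<gamma> * opt)" by (simp add: algebra_simps)
  have "K * real C \<le> K * ((\<beta> + \<gamma> + 1/2) * opt)" using s1 s2 s4 s5 e1 e2 by linarith
  then have "real C \<le> (\<beta> + \<gamma> + 1/2) * opt" using K1 by simp
  then show ?thesis using feas unfolding itp_eq C_def f_def opt_def by simp
qed

end

theorem theorem2:
  fixes E :: "'a \<Rightarrow> 'a \<Rightarrow> bool" and V :: "'a set" and dep :: 'a
    and n k :: nat and \<beta> \<gamma> :: real and S :: "'a list"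
  assumes "finite V" and "card V = n" and "dep \<notin> V"
    and "\<forall>u v. E u v \<longrightarrow> E v u" and "\<forall>u. \<not> E u u"
    and "\<forall>u v. E u v \<longrightarrow> u \<in> insert dep V \<and> v \<in> insert dep V"
    and "connected_graph E V dep"
    and "1 \<le> k" and "k \<le> n"
    and "\<beta> \<ge> 1/2" and "\<gamma> \<ge> 0"
    and "tsp_tour E V dep S"
    and "real (walk_cost S) \<le> \<beta> * real n + \<gamma> * real (tsp_opt E V dep)"
  shows "cvrp_feasible E V dep k (itp E V dep k S) \<and>
         real (sol_cost (itp E V dep k S)) \<le> (\<beta> + \<gamma> + 1/2) * real (cvrp_opt E V dep k)"
proof -
  interpret itp_set E V dep S k
    by unfold_locales (use assms in auto)
  show ?thesis using main[of \<beta> \<gamma>] assms by simp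
qed


end
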